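(* Let $n$ be a positive integer and $w_1\le\dots\le w_m$ a feasible partition of $n$ with partial sums $R_i=w_1+\dots+w_i$, $R_0=0$. Then for every $1\le i\le m$, $R_{i-1} \ge \frac{R_i-1}{3}$.
   Context: A weighing partition of a positive integer $n$ is a multiset of positive integers summing to $n$ such that every integer $\ell$ with $1\le\ell\le n$ is a sum $\sum_j u_jw_j$ with $u_j\in\{-1,0,1\}$. A feasible partition of $n$ is a weighing partition of $n$ whose number of parts $m$ is minimal among all weighing partitions of $n$, written $w_1\le\dots\le w_m$. *)

theory Defs
  imports Complex_Main
begin

definition weighing_partition :: "nat \<Rightarrow> nat list \<Rightarrow> bool" where
  "weighing_partition n ws \<longleftrightarrow>
     (\<forall>w\<in>set ws. 0 < w) \<and> sum_list ws = n \<and>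
     (\<forall>l\<in>{1..n}. \<exists>u::nat \<Rightarrow> int.
        (\<forall>j<length ws. u j \<in> {-1, 0, 1}) \<and>
        int l = (\<Sum>j<length ws. u j * int (ws ! j)))"

definition feasible_partition :: "nat \<Rightarrow> nat list \<Rightarrow> bool" where
  "feasible_partition n ws \<longleftrightarrow>
     sorted ws \<and> weighing_partition n ws \<and>
     (\<forall>vs. weighing_partition n vs \<longrightarrow> length ws \<le> length vs)"

definition partial_sum :: "nat list \<Rightarrow> nat \<Rightarrow> nat" where
  "partial_sum ws i = sum_list (take i ws)"

end

theory Submission
  imports Defs
begin

lemma key:
  assumes srt: "sorted ws" and wp: "weighing_partition n ws" and kL: "k < length ws"
  shows "ws ! k \<le> 2 * sum_list (take k ws) + 1"
proof (rule ccontr)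
  define L where "L = length ws"
  define R where "R = sum_list (take k ws)"
  assume "\<not> ?thesis"
  hence big: "ws ! k \<ge> 2 * R + 2" unfolding R_def by simp
  have Rs: "int R = (\<Sum>j<k. int (ws ! j))"
    unfolding R_def using kL by (simp add: sum_list_sum_nth atLeast0LessThan)
  have ns: "int n = (\<Sum>j<L. int (ws ! j))"
    using wp unfolding weighing_partition_def L_def
    by (auto simp: sum_list_sum_nth atLeast0LessThan)
  have "(\<Sum>j<Suc k. int (ws ! j)) \<le> (\<Sum>j<L. int (ws ! j))"
    by (rule sum_mono2) (use kL L_def in auto)
  hence nge: "int n \<ge> int R + int (ws ! k)" using Rs ns by simp
  define l where "l = n - (2*R+1)"
  have lint: "int l = int n - (2*R+1)" unfolding l_def using nge big by simp
  have "l \<in> {1..n}" using lint nge big by auto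
  then obtain u :: "nat \<Rightarrow> int" where u: "\<forall>j<L. u j \<in> {-1,0,1}"
     and ul: "int l = (\<Sum>j<L. u j * int (ws ! j))"
    using wp unfolding weighing_partition_def L_def by blast
  have tot: "int (2*R+1) = (\<Sum>j<L. (1 - u j) * int (ws ! j))"
    using ul lint ns by (simp add: sum_subtractf algebra_simps)
  have split: "{..<L} = {..<k} \<union> {k..<L}" using kL L_def by auto
  have tot2: "int (2*R+1) = (\<Sum>j<k. (1 - u j) * int (ws ! j)) + (\<Sum>j\<in>{k..<L}. (1 - u j) * int (ws ! j))"
    using tot unfolding split by (subst (asm) sum.union_disjoint) auto
  have A: "(\<Sum>j<k. (1 - u j) * int (ws ! j)) \<le> (\<Sum>j<k. 2 * int (ws ! j))"
  proof (rule sum_mono)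
    fix j assume "j \<in> {..<k}"
    hence "j < L" using kL L_def by auto
    hence "1 - u j \<le> 2" using u by auto
    thus "(1 - u j) * int (ws ! j) \<le> 2 * int (ws ! j)" by (simp add: mult_right_mono)
  qed
  have A0: "(\<Sum>j<k. (1 - u j) * int (ws ! j)) \<ge> 0"
  proof (rule sum_nonneg)
    fix j assume "j \<in> {..<k}"
    hence "j < L" using kL L_def by auto
    hence "1 - u j \<ge> 0" using u by auto
    thus "(1 - u j) * int (ws ! j) \<ge> 0" by simp
  qed
  have Bnn: "\<And>j. j \<in> {k..<L} \<Longrightarrow> (1 - u j) * int (ws ! j) \<ge> 0"
  proof -
    fix j assume "j \<in> {k..<L}"
    hence "j < L" by auto
    hence "1 - u j \<ge> 0" using u by auto
    thus "(1 - u j) * int (ws ! j) \<ge> 0" by simp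
  qed
  show False
  proof (cases "\<exists>j\<in>{k..<L}. (1 - u j) * int (ws ! j) \<noteq> 0")
    case True
    then obtain j where j: "j \<in> {k..<L}" "(1 - u j) * int (ws ! j) \<noteq> 0" by blast
    have "1 - u j \<ge> 1" using j Bnn[OF j(1)] u by (cases "j < L") auto
    hence "(1 - u j) * int (ws ! j) \<ge> int (ws ! j)"
      by (simp add: mult_right_mono[of 1 "1 - u j" "int (ws!j)", simplified])
    moreover have "ws ! k \<le> ws ! j" using srt j(1) L_def by (auto intro: sorted_nth_mono)
    moreover have "(1 - u j) * int (ws ! j) \<le> (\<Sum>j\<in>{k..<L}. (1 - u j) * int (ws ! j))"
      by (rule member_le_sum) (use j Bnn in auto)
    ultimately show False using tot2 A0 big by linarith
  next
    case False
    hence "(\<Sum>j\<in>{k..<L}. (1 - u j) * int (ws ! j)) = 0" by (intro sum.neutral) auto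
    moreover have "(\<Sum>j<k. 2 * int (ws ! j)) = 2 * int R" using Rs by (simp add: sum_distrib_left)
    ultimately show False using tot2 A by linarith
  qed
qed

theorem mainTheorem7:
  fixes n :: nat and ws :: "nat list"
  assumes "0 < n"
    and "feasible_partition n ws"
  shows "\<forall>i\<in>{1..length ws}.
           real (partial_sum ws (i - 1)) \<ge> (real (partial_sum ws i) - 1) / 3"
proof
  fix i assume i: "i \<in> {1..length ws}"
  define k where "k = i - 1"
  have kL: "k < length ws" and ik: "i = Suc k" using i k_def by auto
  have "ws ! k \<le> 2 * sum_list (take k ws) + 1"
    using key[OF _ _ kL] assms(2) unfolding feasible_partition_def by blast
  moreover have "partial_sum ws i = partial_sum ws k + ws ! k"
    unfolding partial_sum_def ik using kL by (simp add: take_Suc_conv_app_nth)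
  ultimately show "real (partial_sum ws (i - 1)) \<ge> (real (partial_sum ws i) - 1) / 3"
    unfolding k_def[symmetric] partial_sum_def by simp
qed

end
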